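(* Let $G$ be a finitely generated group containing an element of infinite order. For every generating $n$-tuple $S\in\Gamma_n(G)$ and every $m\ge n+2$, the graph $\Gamma_m(G,S)$ has exponential growth.
   Context: For a group $G$, a generating $n$-tuple is $(g_1,\dots,g_n)\in G^n$ with $G=\langle g_1,\dots,g_n\rangle$. The product replacement graph $\Gamma_n(G)$ has vertices the generating $n$-tuples, with edges from $(g_1,\dots,g_n)$ to each tuple obtained by replacing $g_j$ by $g_jg_i^{\pm1}$ or $g_i^{\pm1}g_j$, for every ordered pair $i\neq j$. For $S=(g_1,\dots,g_n)$ and $m\ge n$, $\Gamma_m(G,S)$ is the connected component of $\Gamma_m(G)$ containing $(g_1,\dots,g_n,1,\dots,1)$ ($m-n$ identity entries). A connected graph has exponential growth if for some vertex $v$ there is $\alpha>1$ such that the number of vertices at distance at most $r$ from $v$ is at least $\alpha^r$ for all sufficiently large $r$. *)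

theory Defs
  imports "HOL-Algebra.Multiplicative_Group" "HOL-Algebra.Generated_Groups"
begin

definition fin_gen_group :: "('a, 'b) monoid_scheme \<Rightarrow> bool" where
  "fin_gen_group G \<longleftrightarrow> (\<exists>A. finite A \<and> A \<subseteq> carrier G \<and> generate G A = carrier G)"

definition gen_tuple :: "('a, 'b) monoid_scheme \<Rightarrow> nat \<Rightarrow> 'a list \<Rightarrow> bool" where
  "gen_tuple G n xs \<longleftrightarrow> length xs = n \<and> set xs \<subseteq> carrier G \<and> generate G (set xs) = carrier G"

definition pr_move :: "('a, 'b) monoid_scheme \<Rightarrow> 'a list \<Rightarrow> 'a list \<Rightarrow> bool" where
  "pr_move G xs ys \<longleftrightarrow> (\<exists>i j. i < length xs \<and> j < length xs \<and> i \<noteq> j \<and>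
     (ys = xs[j := xs ! j \<otimes>\<^bsub>G\<^esub> xs ! i] \<or>
      ys = xs[j := xs ! j \<otimes>\<^bsub>G\<^esub> inv\<^bsub>G\<^esub> (xs ! i)] \<or>
      ys = xs[j := xs ! i \<otimes>\<^bsub>G\<^esub> xs ! j] \<or>
      ys = xs[j := inv\<^bsub>G\<^esub> (xs ! i) \<otimes>\<^bsub>G\<^esub> xs ! j]))"

definition pr_edge :: "('a, 'b) monoid_scheme \<Rightarrow> nat \<Rightarrow> 'a list \<Rightarrow> 'a list \<Rightarrow> bool" where
  "pr_edge G n xs ys \<longleftrightarrow> gen_tuple G n xs \<and> gen_tuple G n ys \<and> pr_move G xs ys"

definition pr_component :: "('a, 'b) monoid_scheme \<Rightarrow> nat \<Rightarrow> 'a list \<Rightarrow> 'a list set" where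
  "pr_component G m S =
     {ys. (\<lambda>u v. pr_edge G m u v \<or> pr_edge G m v u)\<^sup>*\<^sup>* (S @ replicate (m - length S) \<one>\<^bsub>G\<^esub>) ys}"

definition graph_ball :: "'v set \<Rightarrow> ('v \<Rightarrow> 'v \<Rightarrow> bool) \<Rightarrow> 'v \<Rightarrow> nat \<Rightarrow> 'v set" where
  "graph_ball V E v r =
     {w. \<exists>k\<le>r. ((\<lambda>x y. x \<in> V \<and> y \<in> V \<and> (E x y \<or> E y x)) ^^ k) v w}"

definition exp_growth :: "'v set \<Rightarrow> ('v \<Rightarrow> 'v \<Rightarrow> bool) \<Rightarrow> bool" where
  "exp_growth V E \<longleftrightarrow> (\<exists>v\<in>V. \<exists>\<alpha>::real. \<alpha> > 1 \<and>
     (\<forall>\<^sub>F r in sequentially. \<alpha> ^ r \<le> real (card (graph_ball V E v r))))"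

end

theory Submission
  imports Defs
begin

lemma (in group) pr_move_sym:
  assumes "set xs \<subseteq> carrier G" "pr_move G xs ys"
  shows "pr_move G ys xs"
proof -
  from assms(2) obtain i j where ij: "i < length xs" "j < length xs" "i \<noteq> j" and
    c: "ys = xs[j := xs ! j \<otimes> xs ! i] \<or>
      ys = xs[j := xs ! j \<otimes> inv (xs ! i)] \<or>
      ys = xs[j := xs ! i \<otimes> xs ! j] \<or>
      ys = xs[j := inv (xs ! i) \<otimes> xs ! j]" unfolding pr_move_def by blast
  have xi: "xs ! i \<in> carrier G" and xj: "xs ! j \<in> carrier G" using assms(1) ij by auto
  have len: "length ys = length xs" using c by auto
  have yi: "ys ! i = xs ! i" using c ij by auto
  have bk: "xs = ys[j := z]" if "z = xs ! j" for z
    using c ij that by (auto simp: list_update_overwrite)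
  from c show ?thesis
  proof (elim disjE)
    assume h: "ys = xs[j := xs ! j \<otimes> xs ! i]"
    have "xs = ys[j := ys ! j \<otimes> inv (ys ! i)]"
      using h ij xi xj by (intro bk) (simp add: m_assoc)
    then show ?thesis unfolding pr_move_def using ij len by metis
  next
    assume h: "ys = xs[j := xs ! j \<otimes> inv (xs ! i)]"
    have "xs = ys[j := ys ! j \<otimes> ys ! i]"
      using h ij xi xj by (intro bk) (simp add: m_assoc)
    then show ?thesis unfolding pr_move_def using ij len by metis
  next
    assume h: "ys = xs[j := xs ! i \<otimes> xs ! j]"
    have "xs = ys[j := inv (ys ! i) \<otimes> ys ! j]"
      using h ij xi xj by (intro bk) (simp add: m_assoc[symmetric])
    then show ?thesis unfolding pr_move_def using ij len by metis
  next
    assume h: "ys = xs[j := inv (xs ! i) \<otimes> xs ! j]"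
    have "xs = ys[j := ys ! i \<otimes> ys ! j]"
      using h ij xi xj by (intro bk) (simp add: m_assoc[symmetric])
    then show ?thesis unfolding pr_move_def using ij len by metis
  qed
qed

lemma pr_move_finite: "finite {ys. pr_move G xs ys}"
proof -
  have "{ys. pr_move G xs ys} \<subseteq> (\<Union>i<length xs. \<Union>j<length xs.
     {xs[j := xs ! j \<otimes>\<^bsub>G\<^esub> xs ! i], xs[j := xs ! j \<otimes>\<^bsub>G\<^esub> inv\<^bsub>G\<^esub> (xs ! i)],
      xs[j := xs ! i \<otimes>\<^bsub>G\<^esub> xs ! j], xs[j := inv\<^bsub>G\<^esub> (xs ! i) \<otimes>\<^bsub>G\<^esub> xs ! j]})"
    unfolding pr_move_def by blast
  then show ?thesis by (rule finite_subset) auto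
qed

lemma ball_finite:
  assumes "group G"
  shows "finite (graph_ball V (pr_edge G m) v r)"
proof -
  define R where "R = (\<lambda>x y. x \<in> V \<and> y \<in> V \<and> (pr_edge G m x y \<or> pr_edge G m y x))"
  have succ: "finite {w. R u w}" for u
  proof -
    have "{w. R u w} \<subseteq> {w. pr_move G u w}"
      unfolding R_def pr_edge_def gen_tuple_def using group.pr_move_sym[OF assms] by blast
    then show ?thesis using pr_move_finite finite_subset by blast
  qed
  have fk: "finite {w. (R ^^ k) v w}" for k
  proof (induction k)
    case 0 then show ?case by simp
  next
    case (Suc k)
    have "{w. (R ^^ Suc k) v w} = (\<Union>u\<in>{w. (R ^^ k) v w}. {w. R u w})" by auto
    then show ?case using Suc succ by auto
  qed
  have "graph_ball V (pr_edge G m) v r = (\<Union>k\<le>r. {w. (R ^^ k) v w})"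
    unfolding graph_ball_def R_def by auto
  then show ?thesis using fk by auto
qed


fun cw :: "bool list \<Rightarrow> int \<times> int" where
  "cw [] = (1, 1)"
| "cw (b # w) = (case cw w of (a, c) \<Rightarrow> if b then (a, a + c) else (a + c, c))"

lemma cw_pos: "cw w = (a, c) \<Longrightarrow> a \<ge> 1 \<and> c \<ge> 1"
proof (induction w arbitrary: a c)
  case Nil then show ?case by simp
next
  case (Cons b w)
  obtain a' c' where e: "cw w = (a', c')" by fastforce
  with Cons show ?case by (auto split: if_splits)
qed

lemma cw_inj: "length w1 = length w2 \<Longrightarrow> cw w1 = cw w2 \<Longrightarrow> w1 = w2"
proof (induction w1 arbitrary: w2)
  case Nil then show ?case by simp
next
  case (Cons b w)
  then obtain b' w' where w2: "w2 = b' # w'" by (cases w2) auto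
  obtain a c where e: "cw w = (a, c)" by fastforce
  obtain a' c' where e': "cw w' = (a', c')" by fastforce
  have p: "a \<ge> 1" "c \<ge> 1" "a' \<ge> 1" "c' \<ge> 1" using cw_pos[OF e] cw_pos[OF e'] by auto
  have eq: "(if b then (a, a + c) else (a + c, c)) = (if b' then (a', a' + c') else (a' + c', c'))"
    using Cons.prems(2) e e' w2 by simp
  have bb: "b = b'" using eq p by (auto split: if_splits)
  have "cw w = cw w'" using eq bb e e' by (auto split: if_splits)
  then have "w = w'" using Cons w2 by auto
  then show ?case using w2 bb by simp
qed

lemma (in group) T_gen:
  assumes "gen_tuple G n S" "length t = m" "take n t = S" "set t \<subseteq> carrier G"
  shows "gen_tuple G m t"
proof -
  have "set S \<subseteq> set t" using assms(3) set_take_subset by metis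
  then have "generate G (set S) \<subseteq> generate G (set t)" by (rule mono_generate)
  moreover have "generate G (set t) \<subseteq> carrier G" using assms(4) by (rule generate_incl)
  ultimately show ?thesis using assms unfolding gen_tuple_def by auto
qed

lemma (in group) reach:
  assumes S: "gen_tuple G n S" and h: "h \<in> generate G (set S)"
  shows "\<forall>t k. length t = m \<and> take n t = S \<and> set t \<subseteq> carrier G \<and> n \<le> k \<and> k < m \<longrightarrow>
     (pr_edge G m)\<^sup>*\<^sup>* t (t[k := t ! k \<otimes> h])"
  using h
proof (induction h rule: generate.induct)
  case one
  show ?case
  proof (intro allI impI)
    fix t k assume a: "length t = m \<and> take n t = S \<and> set t \<subseteq> carrier G \<and> n \<le> k \<and> k < m"
    then have "t ! k \<in> carrier G" by auto
    then have "t[k := t ! k \<otimes> \<one>] = t" by simp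
    then show "(pr_edge G m)\<^sup>*\<^sup>* t (t[k := t ! k \<otimes> \<one>])" by simp
  qed
next
  case (incl h)
  show ?case
  proof (intro allI impI)
    fix t k assume a: "length t = m \<and> take n t = S \<and> set t \<subseteq> carrier G \<and> n \<le> k \<and> k < m"
    obtain i where i: "i < n" "S ! i = h" using incl S unfolding gen_tuple_def by (auto simp: in_set_conv_nth)
    have ti: "t ! i = h" using a i by (metis nth_take)
    have hc: "h \<in> carrier G" using incl S unfolding gen_tuple_def by auto
    have tk: "t ! k \<in> carrier G" using a by auto
    have "pr_move G t (t[k := t ! k \<otimes> h])"
      unfolding pr_move_def using a i ti by (intro exI[of _ i] exI[of _ k]) auto
    moreover have "gen_tuple G m t" using a by (intro T_gen[OF S]) auto
    moreover have "gen_tuple G m (t[k := t ! k \<otimes> h])"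
      using a hc tk by (intro T_gen[OF S]) (simp_all add: set_update_subsetI)
    ultimately show "(pr_edge G m)\<^sup>*\<^sup>* t (t[k := t ! k \<otimes> h])"
      unfolding pr_edge_def by auto
  qed
next
  case (inv h)
  show ?case
  proof (intro allI impI)
    fix t k assume a: "length t = m \<and> take n t = S \<and> set t \<subseteq> carrier G \<and> n \<le> k \<and> k < m"
    obtain i where i: "i < n" "S ! i = h" using inv S unfolding gen_tuple_def by (auto simp: in_set_conv_nth)
    have ti: "t ! i = h" using a i by (metis nth_take)
    have hc: "h \<in> carrier G" using inv S unfolding gen_tuple_def by auto
    have tk: "t ! k \<in> carrier G" using a by auto
    have "pr_move G t (t[k := t ! k \<otimes> inv h])"
      unfolding pr_move_def using a i ti by (intro exI[of _ i] exI[of _ k]) auto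
    moreover have "gen_tuple G m t" using a by (intro T_gen[OF S]) auto
    moreover have "gen_tuple G m (t[k := t ! k \<otimes> inv h])"
      using a hc tk by (intro T_gen[OF S]) (simp_all add: set_update_subsetI)
    ultimately show "(pr_edge G m)\<^sup>*\<^sup>* t (t[k := t ! k \<otimes> inv h])"
      unfolding pr_edge_def by auto
  qed
next
  case (eng h1 h2)
  have sc: "set S \<subseteq> carrier G" using S unfolding gen_tuple_def by auto
  have h1c: "h1 \<in> carrier G" and h2c: "h2 \<in> carrier G"
    using eng.hyps generate_incl[OF sc] by auto
  show ?case
  proof (intro allI impI)
    fix t k assume a: "length t = m \<and> take n t = S \<and> set t \<subseteq> carrier G \<and> n \<le> k \<and> k < m"
    define t' where "t' = t[k := t ! k \<otimes> h1]"
    have tk: "t ! k \<in> carrier G" using a by auto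
    have r1: "(pr_edge G m)\<^sup>*\<^sup>* t t'" using eng.IH(1) a unfolding t'_def by blast
    have a': "length t' = m \<and> take n t' = S \<and> set t' \<subseteq> carrier G \<and> n \<le> k \<and> k < m"
      using a tk h1c unfolding t'_def by (simp_all add: set_update_subsetI)
    have r2: "(pr_edge G m)\<^sup>*\<^sup>* t' (t'[k := t' ! k \<otimes> h2])" using eng.IH(2) a' by blast
    have "t'[k := t' ! k \<otimes> h2] = t[k := t ! k \<otimes> (h1 \<otimes> h2)]"
      unfolding t'_def using a tk h1c h2c by (simp add: m_assoc)
    then show "(pr_edge G m)\<^sup>*\<^sup>* t (t[k := t ! k \<otimes> (h1 \<otimes> h2)])"
      using r1 r2 by simp
  qed
qed


lemma (in group) main_aux:
  assumes ord0: "\<exists>g\<in>carrier G. ord g = 0"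
    and S: "gen_tuple G n S"
    and mn: "m \<ge> n + 2"
  shows "exp_growth (pr_component G m S) (pr_edge G m)"
proof -
  obtain g where gc: "g \<in> carrier G" and go: "ord g = 0" using ord0 by blast
  have lS: "length S = n" and sc: "set S \<subseteq> carrier G" and gS: "generate G (set S) = carrier G"
    using S unfolding gen_tuple_def by auto
  have gg: "g \<in> generate G (set S)" using gS gc by simp
  define rest where "rest = replicate (m - n - 2) \<one>"
  have restc: "set rest \<subseteq> carrier G" unfolding rest_def by auto
  have lrest: "length rest = m - n - 2" unfolding rest_def by simp
  define tup where "tup = (\<lambda>(a::int, c::int). S @ [g [^] a, g [^] c] @ rest)"
  have tupT: "length (tup p) = m \<and> take n (tup p) = S \<and> set (tup p) \<subseteq> carrier G" for p
    using lS lrest restc mn gc sc unfolding tup_def by (auto split: prod.splits)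
  have tup_n: "tup (a, c) ! n = g [^] a" and tup_n1: "tup (a, c) ! Suc n = g [^] c" for a c
    unfolding tup_def using lS by (auto simp: nth_append)
  have tup_inj: "p = q" if "tup p = tup q" for p q
  proof -
    obtain a c where p: "p = (a, c)" by fastforce
    obtain a' c' where q: "q = (a', c')" by fastforce
    have "g [^] a = g [^] a'" using that tup_n p q by metis
    then have "a = a'" using int_pow_eq[OF gc] go by simp
    moreover have "g [^] c = g [^] c'" using that tup_n1 p q by metis
    then have "c = c'" using int_pow_eq[OF gc] go by simp
    ultimately show ?thesis using p q by simp
  qed
  define base where "base = S @ replicate (m - length S) \<one>"
  have base_eq: "base = S @ [\<one>, \<one>] @ rest"
  proof -
    have "m - n = Suc (Suc (m - n - 2))" using mn by simp
    then show ?thesis unfolding base_def rest_def using lS by (simp del: replicate_Suc) simp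
  qed
  define V where "V = pr_component G m S"
  have baseV: "base \<in> V" unfolding V_def pr_component_def base_def by simp
  have Vclos: "w \<in> V" if "u \<in> V" "pr_edge G m u w" for u w
    using that unfolding V_def pr_component_def
    by (auto intro: rtranclp.rtrancl_into_rtrancl)
  have Vreach: "w \<in> V" if "u \<in> V" "(pr_edge G m)\<^sup>*\<^sup>* u w" for u w
    using that(2,1) by induction (auto intro: Vclos)
  have r1: "(pr_edge G m)\<^sup>*\<^sup>* base (base[n := base ! n \<otimes> g])"
    by (rule reach[OF S gg, of m, rule_format])
       (use base_eq lS lrest mn restc sc in auto)
  have b1: "base[n := base ! n \<otimes> g] = S @ [g, \<one>] @ rest"
    using base_eq lS gc by (simp add: nth_append list_update_append)
  have r2: "(pr_edge G m)\<^sup>*\<^sup>* (S @ [g, \<one>] @ rest) ((S @ [g, \<one>] @ rest)[Suc n := (S @ [g, \<one>] @ rest) ! Suc n \<otimes> g])"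
    by (rule reach[OF S gg, of m, rule_format])
       (use lS lrest mn restc sc gc in auto)
  have b2: "(S @ [g, \<one>] @ rest)[Suc n := (S @ [g, \<one>] @ rest) ! Suc n \<otimes> g] = tup (1, 1)"
    unfolding tup_def using lS gc by (simp add: nth_append list_update_append)
  define v where "v = tup (1, 1)"
  have v1: "S @ [g, \<one>] @ rest \<in> V" using Vreach[OF baseV r1] b1 by simp
  have vV: "v \<in> V" using Vreach[OF v1 r2] b2 v_def by simp
  define R where "R = (\<lambda>x y. x \<in> V \<and> y \<in> V \<and> (pr_edge G m x y \<or> pr_edge G m y x))"
  have path: "(R ^^ length w) v (tup (cw w)) \<and> tup (cw w) \<in> V" for w
  proof (induction w)
    case Nil then show ?case using vV v_def by simp
  next
    case (Cons b w)
    obtain a c where e: "cw w = (a, c)" by fastforce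
    let ?t = "tup (a, c)"
    have tT: "gen_tuple G m ?t" using tupT by (intro T_gen[OF S]) auto
    have nxt: "pr_edge G m ?t (tup (cw (b # w)))"
    proof (cases b)
      case True
      have pw: "g [^] (a + c) = g [^] c \<otimes> g [^] a" by (metis add.commute gc int_pow_mult)
      have eq: "tup (cw (b # w)) = ?t[Suc n := ?t ! Suc n \<otimes> ?t ! n]"
        using True e lS gc unfolding tup_def
        by (simp add: nth_append list_update_append pw)
      have "pr_move G ?t (tup (cw (b # w)))"
        unfolding pr_move_def eq using tupT[of "(a,c)"] mn
        by (intro exI[of _ n] exI[of _ "Suc n"]) auto
      moreover have "gen_tuple G m (tup (cw (b # w)))" using tupT by (intro T_gen[OF S]) auto
      ultimately show ?thesis using tT unfolding pr_edge_def by auto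
    next
      case False
      have eq: "tup (cw (b # w)) = ?t[n := ?t ! n \<otimes> ?t ! Suc n]"
        using False e lS gc unfolding tup_def
        by (simp add: nth_append list_update_append int_pow_mult)
      have "pr_move G ?t (tup (cw (b # w)))"
        unfolding pr_move_def eq using tupT[of "(a,c)"] mn
        by (intro exI[of _ "Suc n"] exI[of _ n]) auto
      moreover have "gen_tuple G m (tup (cw (b # w)))" using tupT by (intro T_gen[OF S]) auto
      ultimately show ?thesis using tT unfolding pr_edge_def by auto
    qed
    have tV: "?t \<in> V" using Cons e by simp
    have nV: "tup (cw (b # w)) \<in> V" using Vclos[OF tV nxt] .
    have "(R ^^ Suc (length w)) v (tup (cw (b # w)))"
      using Cons e nV tV nxt unfolding R_def by (auto intro: relpowp_Suc_I)
    then show ?case using nV by simp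
  qed
  have ev: "2 ^ r \<le> real (card (graph_ball V (pr_edge G m) v r))" for r
  proof -
    have sub: "(tup \<circ> cw) ` {w. set w \<subseteq> (UNIV::bool set) \<and> length w = r} \<subseteq> graph_ball V (pr_edge G m) v r"
      unfolding graph_ball_def R_def[symmetric] using path by auto
    have inj: "inj_on (tup \<circ> cw) {w. set w \<subseteq> (UNIV::bool set) \<and> length w = r}"
      by (rule inj_onI) (use tup_inj cw_inj in auto)
    have "card (graph_ball V (pr_edge G m) v r) \<ge> card ((tup \<circ> cw) ` {w. set w \<subseteq> (UNIV::bool set) \<and> length w = r})"
      by (rule card_mono[OF ball_finite[OF is_group] sub])
    also have "card ((tup \<circ> cw) ` {w. set w \<subseteq> (UNIV::bool set) \<and> length w = r}) = 2 ^ r"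
      using card_image[OF inj] card_lists_length_eq[of "UNIV::bool set" r] by simp
    finally show ?thesis by simp
  qed
  show ?thesis unfolding exp_growth_def V_def[symmetric]
    using vV ev by (intro bexI[of _ v] exI[of _ "2::real"]) auto
qed

theorem lemma3p8:
  fixes G :: "('a, 'b) monoid_scheme" and S :: "'a list" and n m :: nat
  assumes "group G"
    and "fin_gen_group G"
    and "\<exists>g\<in>carrier G. group.ord G g = 0"
    and "gen_tuple G n S"
    and "m \<ge> n + 2"
  shows "exp_growth (pr_component G m S) (pr_edge G m)"
  using group.main_aux[OF assms(1) assms(3) assms(4) assms(5)] .

end
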